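(* Let $\mu\in GF(q)\setminus\{0\}$ with $b:=\mu^2\neq1$. Then the $2(q+1)$ common tangent circles of $\mathcal B_1$ and $\mathcal B_b$ are exactly the circles in $$\{\mathcal B^1_{(sP,c)}:P\in\mathcal B_1\}\ \cup\ \{\mathcal B^1_{(s'P,c')}:P\in\mathcal B_1\},$$ where $s=\frac{1+\mu}2$, $c=\left(\frac{1-\mu}2\right)^2$, $s'=\frac{1-\mu}2$, $c'=\left(\frac{1+\mu}2\right)^2$. Moreover, for every $P\in\mathcal B_1$ we have $P,\mu P\in\mathcal B^1_{(sP,c)}$ and $P,-\mu P\in\mathcal B^1_{(s'P,c')}$.
   Context: Let $p$ be an odd prime, $m\ge1$, and $q=p^m$. $GF(q^2)$ denotes the quadratic extension of $GF(q)$, and for $z\in GF(q^2)$ we write $\bar z:=z^{q}$. The Miquelian Möbius plane $\mathbb M(q)$ has point set $GF(q^2)\cup\{\infty\}$ and circles of two types: for $s\in GF(q^2)$ and $c\in GF(q)\setminus\{0\}$, the circle of the first type $\mathcal B^1_{(s,c)}=\{z\in GF(q^2):(z-s)(\bar z-\bar s)=c\}$; for $s\in GF(q^2)\setminus\{0\}$ and $c\in GF(q)$, the circle of the second type $\mathcal B^2_{(s,c)}=\{z\in GF(q^2):\bar s z+s\bar z=c\}\cup\{\infty\}$. Two circles are called tangential if they have exactly one point in common. For $a\in GF(q)\setminus\{0\}$ put $\mathcal B_a:=\mathcal B^1_{(0,a)}$; so $\mathcal B_1=\{z: z\bar z=1\}$. *)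

theory Defs
  imports "HOL-Computational_Algebra.Primes"
begin

text \<open>The field GF(q^2) is modelled as a finite field type 'a of cardinality q^2;
 the points of the Miquelian Moebius plane are 'a option, with None playing the role of infinity.\<close>

definition conjq :: "nat \<Rightarrow> 'a::field \<Rightarrow> 'a" where
  "conjq q z = z ^ q"

definition GFq :: "nat \<Rightarrow> 'a::field set" where
  "GFq q = {z. z ^ q = z}"

definition circle1 :: "nat \<Rightarrow> 'a::field \<Rightarrow> 'a \<Rightarrow> 'a option set" where
  "circle1 q s c = {Some z | z. (z - s) * (conjq q z - conjq q s) = c}"

definition circle2 :: "nat \<Rightarrow> 'a::field \<Rightarrow> 'a \<Rightarrow> 'a option set" where
  "circle2 q s c = {Some z | z. conjq q s * z + s * conjq q z = c} \<union> {None}"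

definition circles :: "nat \<Rightarrow> 'a::field option set set" where
  "circles q = {circle1 q s c | s c. c \<in> GFq q \<and> c \<noteq> 0}
             \<union> {circle2 q s c | s c. s \<noteq> 0 \<and> c \<in> GFq q}"

definition tangential :: "'a set \<Rightarrow> 'a set \<Rightarrow> bool" where
  "tangential C D \<longleftrightarrow> card (C \<inter> D) = 1"

end

theory Submission
  imports Defs "HOL-Number_Theory.Residues" "HOL-Computational_Algebra.Polynomial"
begin

lemma classify:
  fixes n d \<mu> :: "'a::field"
  assumes two: "(2::'a) \<noteq> 0" and m1: "\<mu> \<noteq> 1" and m2: "\<mu> \<noteq> -1"
    and E1: "(1 + n - d)^2 = 4 * 1 * n" and E2: "(\<mu>^2 + n - d)^2 = 4 * \<mu>^2 * n"
  shows "(n = ((1+\<mu>)/2)^2 \<and> d = ((1-\<mu>)/2)^2) \<or> (n = ((1-\<mu>)/2)^2 \<and> d = ((1+\<mu>)/2)^2)"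
proof -
  have four: "(4::'a) \<noteq> 0" using two by (metis mult_eq_0_iff numeral_Bit0 mult_2 one_add_one numeral_times_numeral semiring_norm(12) num_double)
  define e where "e = 1 + n - d"
  have dn: "d = 1 + n - e" unfolding e_def by simp
  have E1': "e^2 = 4 * n" using E1 unfolding e_def by simp
  have "(e + \<mu>^2 - 1)^2 = \<mu>^2 * e^2" using E2 E1' unfolding e_def by (simp add: algebra_simps)
  hence "((1 - \<mu>) * (e - 1 - \<mu>)) * ((1 + \<mu>) * (e - 1 + \<mu>)) = 0"
    by (simp add: power2_eq_square algebra_simps)
  hence "e - 1 - \<mu> = 0 \<or> e - 1 + \<mu> = 0" using m1 m2
    by (auto simp: add_eq_0_iff eq_commute[of 1 \<mu>])
  thus ?thesis
  proof
    assume "e - 1 - \<mu> = 0"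
    hence e: "e = 1 + \<mu>" by (simp add: algebra_simps)
    have n: "n = ((1+\<mu>)/2)^2" using E1' two four unfolding e by (simp add: field_simps)
    have "d = ((1-\<mu>)/2)^2" unfolding dn n e using two four by (simp add: field_simps power2_eq_square)
    with n show ?thesis by simp
  next
    assume "e - 1 + \<mu> = 0"
    hence e: "e = 1 - \<mu>" by (simp add: algebra_simps)
    have n: "n = ((1-\<mu>)/2)^2" using E1' two four unfolding e by (simp add: field_simps)
    have "d = ((1+\<mu>)/2)^2" unfolding dn n e using two four by (simp add: field_simps power2_eq_square)
    with n show ?thesis by simp
  qed
qed


lemma pow_card_same:
  fixes x :: "'a :: {field,finite}"
  shows "x ^ card (UNIV :: 'a set) = x"
proof (cases "x = 0")
  case False
  have "x * (\<Prod>y\<in>UNIV-{0}. x * y) = x * x ^ (card (UNIV :: 'a set) - 1) * \<Prod>(UNIV-{0})"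
    by (simp add: prod.distrib mult_ac)
  also have "x * x ^ (card (UNIV :: 'a set) - 1) = x ^ Suc (card (UNIV :: 'a set) - 1)"
    by (subst power_Suc) auto
  also have "Suc (card (UNIV :: 'a set) - 1) = card (UNIV :: 'a set)"
    using finite_UNIV_card_ge_0[where ?'a = 'a] by simp
  also have "(\<Prod>y\<in>UNIV-{0}. x * y) = (\<Prod>y\<in>UNIV-{0}. y)"
    by (rule prod.reindex_bij_witness[of _ "\<lambda>y. y / x" "\<lambda>y. x * y"]) (use False in auto)
  finally show ?thesis
    by simp
qed (use finite_UNIV_card_ge_0[where ?'a = 'a] in auto)

lemma roots_bound:
  fixes p :: "'a::field poly"
  assumes "degree p < n"
  shows "card {x. x ^ n = poly p x} \<le> n"
proof -
  define r where "r = monom (1::'a) n - p"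
  have dr: "degree r = n" unfolding r_def using assms
    by (metis add_uminus_conv_diff degree_add_eq_left degree_minus degree_monom_eq one_neq_zero)
  have "r \<noteq> 0" using assms dr by auto
  hence "card {x. poly r x = 0} \<le> degree r" by (rule card_poly_roots_bound)
  moreover have "{x. poly r x = 0} = {x. x ^ n = poly p x}" unfolding r_def by (simp add: poly_monom)
  ultimately show ?thesis using dr by simp
qed

lemma card_U:
  fixes dummy :: "'a :: {field,finite}"
  assumes card: "card (UNIV :: 'a set) = q ^ 2" and q1: "q > 1"
  shows "card {x :: 'a. x * x ^ q = 1} = q + 1"
proof -
  define U where "U = {x :: 'a. x * x ^ q = 1}"
  define K where "K = {x :: 'a. x ^ q = x} - {0}"
  have U_le: "card U \<le> q + 1"
    using roots_bound[of "[:1::'a:]" "q+1"] unfolding U_def by simp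
  have "card {x :: 'a. x ^ q = poly [:0,1:] x} \<le> q"
    by (rule roots_bound) (use q1 in simp)
  hence "card {x :: 'a. x ^ q = x} \<le> q" by simp
  hence K_le: "card K \<le> q - 1" unfolding K_def
    using q1 by (simp add: card_Diff_singleton_if)
  have pq: "x ^ (q * q) = x" for x :: 'a using pow_card_same[of x] card by (simp add: power2_eq_square)
  define fib where "fib v = {x::'a. x \<noteq> 0 \<and> x * x ^ q = v}" for v
  have sub: "UNIV - {0} \<subseteq> (\<Union>v\<in>K. fib v)"
  proof
    fix x :: 'a assume x: "x \<in> UNIV - {0}"
    have "(x * x ^ q) ^ q = x ^ (q * q) * x ^ q" by (simp add: power_mult_distrib power_mult)
    also have "\<dots> = x * x ^ q" using pq by simp
    finally have "x * x ^ q \<in> K" using x unfolding K_def by auto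
    thus "x \<in> (\<Union>v\<in>K. fib v)" using x unfolding fib_def by auto
  qed
  have fib_le: "card (fib v) \<le> card U" for v
  proof (cases "fib v = {}")
    case False
    then obtain x0 where x0: "x0 \<in> fib v" by auto
    hence x00: "x0 \<noteq> 0" unfolding fib_def by auto
    have "fib v \<subseteq> (\<lambda>u. x0 * u) ` U"
    proof
      fix x assume x: "x \<in> fib v"
      have "(x / x0) * (x / x0) ^ q = (x * x ^ q) / (x0 * x0 ^ q)"
        by (simp add: power_divide)
      also have "\<dots> = 1" using x x0 x00 unfolding fib_def by (auto simp: power_eq_0_iff)
      finally have "x / x0 \<in> U" unfolding U_def by simp
      moreover have "x = x0 * (x / x0)" using x00 by simp
      ultimately show "x \<in> (\<lambda>u. x0 * u) ` U" by blast
    qed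
    hence "card (fib v) \<le> card ((\<lambda>u. x0 * u) ` U)" by (intro card_mono) auto
    also have "\<dots> \<le> card U" by (rule card_image_le) auto
    finally show ?thesis .
  qed simp
  have "q * q - 1 = card (UNIV - {0::'a})" using card by (simp add: power2_eq_square)
  also have "\<dots> \<le> card (\<Union>v\<in>K. fib v)" by (intro card_mono sub) auto
  also have "\<dots> \<le> (\<Sum>v\<in>K. card (fib v))" by (rule card_UN_le) auto
  also have "\<dots> \<le> card K * card U" using fib_le sum_bounded_above[of K "\<lambda>v. card (fib v)" "card U"] by simp
  also have "\<dots> \<le> (q - 1) * card U" using K_le by simp
  finally have A: "q * q - 1 \<le> (q - 1) * card U" .
  have "(q - 1) * (q + 1) = q * q - 1" by (cases q) simp_all
  with A have "(q - 1) * (q + 1) \<le> (q - 1) * card U" by simp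
  moreover have "0 < q - 1" using q1 by simp
  ultimately have "q + 1 \<le> card U" by (rule mult_left_le_imp_le)
  with U_le show ?thesis unfolding U_def by simp
qed


locale frob = fixes q :: nat and cj :: "'a::field \<Rightarrow> 'a"
  assumes cj_def: "conjq q = cj"
  and qpos: "q > 0"
  and fadd: "\<And>x y. cj (x + y) = cj x + cj y"
  and finv: "\<And>x. cj (cj x) = x"
  and two: "(2::'a) \<noteq> 0"
begin

lemma cj_pow: "cj x = x ^ q" using cj_def unfolding conjq_def by metis
lemma cj_mult[simp]: "cj (x * y) = cj x * cj y" by (simp add: cj_pow power_mult_distrib)
lemma cj_0[simp]: "cj 0 = 0" using qpos by (simp add: cj_pow)
lemma cj_1[simp]: "cj 1 = 1" by (simp add: cj_pow)
lemma cj_add[simp]: "cj (x + y) = cj x + cj y" by (rule fadd)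
lemma cj_cj[simp]: "cj (cj x) = x" by (rule finv)
lemma cj_uminus[simp]: "cj (- x) = - cj x"
proof -
  have "cj (x + - x) = 0" by simp
  then have "cj x + cj (- x) = 0" by (simp only: cj_add)
  then show ?thesis by (simp add: eq_neg_iff_add_eq_0 add.commute)
qed
lemma cj_diff[simp]: "cj (x - y) = cj x - cj y"
  using cj_add[of x "-y"] by simp
lemma cj_inverse[simp]: "cj (inverse x) = inverse (cj x)" by (simp add: cj_pow power_inverse)
lemma cj_divide[simp]: "cj (x / y) = cj x / cj y" by (simp add: divide_inverse)
lemma cj_of_nat[simp]: "cj (of_nat n) = of_nat n" by (induction n) auto
lemma cj_numeral[simp]: "cj (numeral n) = numeral n"
  using cj_of_nat[of "numeral n"] by simp
lemma cj_power[simp]: "cj (x ^ n) = cj x ^ n" by (induction n) auto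
lemma cj_eq_0[simp]: "cj x = 0 \<longleftrightarrow> x = 0"
  by (metis cj_0 cj_cj)
lemma N_eq_0: "x * cj x = 0 \<longleftrightarrow> x = 0" by simp
lemma GFq_iff: "x \<in> GFq q \<longleftrightarrow> cj x = x" by (simp add: GFq_def cj_pow)

lemma inter1: "circle1 q t d \<inter> circle1 q 0 a
   = Some ` {z. z * cj z = a \<and> cj t * z + t * cj z = a + t * cj t - d}"
proof -
  have "circle1 q t d \<inter> circle1 q 0 a = Some ` {z. (z - t) * (cj z - cj t) = d \<and> z * cj z = a}"
    unfolding circle1_def cj_def by auto
  also have "{z. (z - t) * (cj z - cj t) = d \<and> z * cj z = a}
     = {z. z * cj z = a \<and> cj t * z + t * cj z = a + t * cj t - d}"
    by (auto simp: algebra_simps)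
  finally show ?thesis .
qed

lemma inter2: "circle2 q t d \<inter> circle1 q 0 a
   = Some ` {z. z * cj z = a \<and> cj t * z + t * cj z = d}"
  unfolding circle1_def circle2_def cj_def by auto

lemma nec:
  assumes "card {z. z * cj z = a \<and> cj t * z + t * cj z = e} = 1"
  shows "e^2 = 4 * a * (t * cj t)"
proof -
  from assms obtain z where S: "{z. z * cj z = a \<and> cj t * z + t * cj z = e} = {z}"
    using card_1_singletonE by blast
  hence za: "z * cj z = a" and ze: "cj t * z + t * cj z = e" by auto
  show ?thesis
  proof (cases "t = 0")
    case True then show ?thesis using ze by simp
  next
    case False
    define z' where "z' = t * cj z / cj t"
    have cz': "cj z' = cj t * z / t" by (simp add: z'_def)
    have "z' * cj z' = a" using False za unfolding cz' z'_def by (simp add: field_simps)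
    moreover have "cj t * z' + t * cj z' = e" using False ze unfolding cz' z'_def
      by (simp add: field_simps)
    ultimately have "z' \<in> {z. z * cj z = a \<and> cj t * z + t * cj z = e}" by simp
    hence "z' = z" using S by simp
    hence w: "t * cj z = cj t * z" using False unfolding z'_def by (simp add: field_simps)
    have "e = 2 * (cj t * z)" using ze w by (simp add: mult.commute)
    hence "e^2 = 4 * ((cj t * z) * (t * cj z))" using w by (simp add: power2_eq_square)
    also have "\<dots> = 4 * (z * cj z) * (t * cj t)" by (simp add: algebra_simps)
    finally show ?thesis using za by simp
  qed
qed

lemma uniq0:
  assumes t: "t \<noteq> 0" and D: "e^2 = 4 * a * (t * cj t)"
    and za: "z * cj z = a" and ze: "cj t * z + t * cj z = e"
  shows "z = e / (2 * cj t)"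
proof -
  define w where "w = cj t * z"
  have cw: "cj w = t * cj z" by (simp add: w_def)
  have "w * (e - w) = a * (t * cj t)"
    using ze za unfolding w_def by (auto simp: algebra_simps)
  hence "(2 * w - e)^2 = 0" using D by (simp add: power2_eq_square algebra_simps)
  hence "2 * w = e" by simp
  thus ?thesis using t two unfolding w_def by (simp add: field_simps)
qed

lemma tangent:
  assumes t: "t \<noteq> 0" and D: "(a + t * cj t - d)^2 = 4 * a * (t * cj t)"
    and "Some z0 \<in> circle1 q t d" "Some z0 \<in> circle1 q 0 a"
  shows "circle1 q t d \<inter> circle1 q 0 a = {Some z0}"
proof -
  let ?S = "{z. z * cj z = a \<and> cj t * z + t * cj z = a + t * cj t - d}"
  have z0: "z0 \<in> ?S" using assms(3,4) inter1[of t d a] by auto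
  have "?S = {z0}"
    using z0 uniq0[OF t D] by blast
  thus ?thesis using inter1[of t d a] by simp
qed

lemma mem1: "Some z \<in> circle1 q t d \<longleftrightarrow> (z - t) * (cj z - cj t) = d"
  unfolding circle1_def cj_def by auto

lemma card_Some: "card (Some ` S) = card S"
  by (rule card_image) auto

lemma four: "(4::'a) \<noteq> 0"
  using two by (metis mult_eq_0_iff numeral_Bit0 mult_2 one_add_one numeral_times_numeral semiring_norm(12) num_double)

lemma main_loc:
  assumes mK: "cj \<mu> = \<mu>" and m0: "\<mu> \<noteq> 0" and mb: "\<mu>^2 \<noteq> 1"
    and cardU: "card {P. P * cj P = 1} = q + 1" and fin: "finite (UNIV :: 'a set)"
    and bd: "b = \<mu>^2" and sd: "s = (1 + \<mu>) / 2" and cd: "c = ((1 - \<mu>) / 2) ^ 2"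
    and s'd: "s' = (1 - \<mu>) / 2" and c'd: "c' = ((1 + \<mu>) / 2) ^ 2"
    and Ud: "U = {P. P * cj P = 1}"
    and Td: "T = {C \<in> circles q. tangential C (circle1 q 0 1) \<and> tangential C (circle1 q 0 b)}"
  shows "T = {circle1 q (s * P) c | P. P \<in> U} \<union> {circle1 q (s' * P) c' | P. P \<in> U}
            \<and> card T = 2 * (q + 1)
            \<and> (\<forall>P\<in>U. Some P \<in> circle1 q (s * P) c \<and> Some (\<mu> * P) \<in> circle1 q (s * P) c
                     \<and> Some P \<in> circle1 q (s' * P) c' \<and> Some (- \<mu> * P) \<in> circle1 q (s' * P) c')"
proof -
  have m1: "\<mu> \<noteq> 1" using mb by auto
  have m2: "\<mu> \<noteq> -1" using mb by auto
  have b1: "b \<noteq> 1" using mb bd by simp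
  have cs: "cj s = s" "cj s' = s'" using mK by (simp_all add: sd s'd)
  have s0: "s \<noteq> 0" "s' \<noteq> 0" using two m1 m2 unfolding sd s'd
    by (auto simp: add_eq_0_iff eq_commute[of 1 \<mu>])
  have c0: "c \<noteq> 0" "c' \<noteq> 0" using two m1 m2 unfolding cd c'd
    by (auto simp: add_eq_0_iff eq_commute[of 1 \<mu>])
  have cK: "c \<in> GFq q" "c' \<in> GFq q" using mK by (simp_all add: GFq_iff cd c'd)
  have mus: "\<mu> = 2 * s - 1" "\<mu> = 1 - 2 * s'" using two by (simp_all add: sd s'd field_simps)
  have h: "1 - s = (1 - \<mu>) / 2" "1 - s' = (1 + \<mu>) / 2" using two by (simp_all add: sd s'd field_simps)
  have cs1: "c = (1 - s)^2" "c' = (1 - s')^2" unfolding cd c'd h by simp_all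
  have memb: "Some P \<in> circle1 q (s * P) c \<and> Some (\<mu> * P) \<in> circle1 q (s * P) c
          \<and> Some P \<in> circle1 q (s' * P) c' \<and> Some (- \<mu> * P) \<in> circle1 q (s' * P) c'
          \<and> Some P \<in> circle1 q 0 1 \<and> Some (\<mu> * P) \<in> circle1 q 0 b \<and> Some (- \<mu> * P) \<in> circle1 q 0 b"
    if P: "P * cj P = 1" for P
  proof -
    have e1: "(P - s * P) * (cj P - s * cj P) = (1 - s)^2 * (P * cj P)"
      by (simp add: power2_eq_square algebra_simps)
    have e2: "(\<mu> * P - s * P) * (\<mu> * cj P - s * cj P) = (\<mu> - s)^2 * (P * cj P)"
      by (simp add: power2_eq_square algebra_simps)
    have e3: "(P - s' * P) * (cj P - s' * cj P) = (1 - s')^2 * (P * cj P)"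
      by (simp add: power2_eq_square algebra_simps)
    have e4: "(- \<mu> * P - s' * P) * (- \<mu> * cj P - s' * cj P) = (\<mu> + s')^2 * (P * cj P)"
      by (simp add: power2_eq_square algebra_simps)
    have e5: "(\<mu> * P) * (\<mu> * cj P) = \<mu>^2 * (P * cj P)"
      by (simp add: power2_eq_square algebra_simps)
    have "(1 - s)^2 = c" "(1 - s')^2 = c'" by (simp_all add: cs1)
    moreover have "(\<mu> - s)^2 = c" unfolding cs1 mus(1) by (simp add: power2_eq_square algebra_simps)
    moreover have "(\<mu> + s')^2 = c'" unfolding cs1 mus(2) by (simp add: power2_eq_square algebra_simps)
    ultimately show ?thesis using P e1 e2 e3 e4 e5 mK cs by (simp add: mem1 bd)
  qed
  have tan: "circle1 q (s * P) c \<inter> circle1 q 0 1 = {Some P}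
     \<and> circle1 q (s * P) c \<inter> circle1 q 0 b = {Some (\<mu> * P)}
     \<and> circle1 q (s' * P) c' \<inter> circle1 q 0 1 = {Some P}
     \<and> circle1 q (s' * P) c' \<inter> circle1 q 0 b = {Some (- \<mu> * P)}"
    if P: "P * cj P = 1" for P
  proof -
    have P0: "P \<noteq> 0" using P by auto
    have N1: "(s * P) * cj (s * P) = s^2" using P cs by (simp add: power2_eq_square algebra_simps)
    have N2: "(s' * P) * cj (s' * P) = s'^2" using P cs by (simp add: power2_eq_square algebra_simps)
    have D1: "(1 + s^2 - c)^2 = 4 * 1 * s^2" unfolding cs1 using mus(1) by (simp add: power2_eq_square algebra_simps)
    have D2: "(b + s^2 - c)^2 = 4 * b * s^2" unfolding cs1 bd mus(1) by (simp add: power2_eq_square algebra_simps)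
    have D3: "(1 + s'^2 - c')^2 = 4 * 1 * s'^2" unfolding cs1 using mus(2) by (simp add: power2_eq_square algebra_simps)
    have D4: "(b + s'^2 - c')^2 = 4 * b * s'^2" unfolding cs1 bd mus(2) by (simp add: power2_eq_square algebra_simps)
    show ?thesis
      using tangent[of "s * P" 1 c P] tangent[of "s * P" b c "\<mu> * P"]
        tangent[of "s' * P" 1 c' P] tangent[of "s' * P" b c' "- \<mu> * P"]
        memb[OF P] N1 N2 D1 D2 D3 D4 s0 P0 by simp
  qed
  define f where "f P = circle1 q (s * P) c" for P
  define g where "g P = circle1 q (s' * P) c'" for P
  have RHS: "{circle1 q (s * P) c | P. P \<in> U} = f ` U" "{circle1 q (s' * P) c' | P. P \<in> U} = g ` U"
    unfolding f_def g_def by auto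
  have incl: "f ` U \<union> g ` U \<subseteq> T"
  proof
    fix C assume "C \<in> f ` U \<union> g ` U"
    then obtain P where P: "P * cj P = 1" and C: "C = f P \<or> C = g P" unfolding Ud by auto
    have "C \<in> circles q" using C c0 cK unfolding circles_def f_def g_def by blast
    moreover have "tangential C (circle1 q 0 1) \<and> tangential C (circle1 q 0 b)"
      using C tan[OF P] unfolding tangential_def f_def g_def by auto
    ultimately show "C \<in> T" unfolding Td by simp
  qed
  have incl2: "T \<subseteq> f ` U \<union> g ` U"
  proof
    fix C assume "C \<in> T"
    hence Cc: "C \<in> circles q" and t1: "card (C \<inter> circle1 q 0 1) = 1"
       and tb: "card (C \<inter> circle1 q 0 b) = 1" unfolding Td tangential_def by auto
    from Cc consider (one) t d where "C = circle1 q t d" "d \<in> GFq q" "d \<noteq> 0"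
      | (two) t d where "C = circle2 q t d" "t \<noteq> 0" "d \<in> GFq q"
      unfolding circles_def by blast
    then show "C \<in> f ` U \<union> g ` U"
    proof cases
      case one
      let ?n = "t * cj t"
      have E1: "(1 + ?n - d)^2 = 4 * 1 * ?n"
        using t1 unfolding one inter1 card_Some by (rule nec)
      have E2: "(\<mu>^2 + ?n - d)^2 = 4 * \<mu>^2 * ?n"
        using tb unfolding one inter1 card_Some bd by (rule nec)
      show ?thesis
      proof (cases "t = 0")
        case True
        hence "(1 - d)^2 = 0" "(\<mu>^2 - d)^2 = 0" using E1 E2 by simp_all
        hence "\<mu>^2 = 1" by simp
        with mb show ?thesis by simp
      next
        case False
        from classify[OF two m1 m2 E1 E2] show ?thesis
        proof
          assume H: "?n = ((1 + \<mu>) / 2)^2 \<and> d = ((1 - \<mu>) / 2)^2"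
          have Hn: "?n = s^2" "d = c" using H unfolding sd[symmetric] cd[symmetric] by simp_all
          define P where "P = t / s"
          have "P * cj P = ?n / (s * s)" using cs unfolding P_def by simp
          also have "\<dots> = 1" using Hn s0 by (simp add: power2_eq_square)
          finally have "P \<in> U" unfolding Ud by simp
          moreover have "C = f P" unfolding f_def one P_def using Hn s0 by simp
          ultimately show ?thesis by blast
        next
          assume H: "?n = ((1 - \<mu>) / 2)^2 \<and> d = ((1 + \<mu>) / 2)^2"
          have Hn: "?n = s'^2" "d = c'" using H unfolding s'd[symmetric] c'd[symmetric] by simp_all
          define P where "P = t / s'"
          have "P * cj P = ?n / (s' * s')" using cs unfolding P_def by simp
          also have "\<dots> = 1" using Hn s0 by (simp add: power2_eq_square)
          finally have "P \<in> U" unfolding Ud by simp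
          moreover have "C = g P" unfolding g_def one P_def using Hn s0 by simp
          ultimately show ?thesis by blast
        qed
      qed
    next
      case two
      let ?n = "t * cj t"
      have E1: "d^2 = 4 * 1 * ?n"
        using t1 unfolding two inter2 card_Some by (rule nec)
      have E2: "d^2 = 4 * b * ?n"
        using tb unfolding two inter2 card_Some by (rule nec)
      have "4 * ?n * (b - 1) = 0" using E1 E2 by (simp add: algebra_simps)
      hence "?n = 0" using four b1 by simp
      with two show ?thesis by simp
    qed
  qed
  have Teq: "T = f ` U \<union> g ` U" using incl incl2 by blast
  have finU: "finite U" using fin by (rule finite_subset[rotated]) simp
  have tf: "f P \<inter> circle1 q 0 1 = {Some P}" "f P \<inter> circle1 q 0 b = {Some (\<mu> * P)}"
     "g P \<inter> circle1 q 0 1 = {Some P}" "g P \<inter> circle1 q 0 b = {Some (- \<mu> * P)}"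
    if "P \<in> U" for P
    using tan[of P] that unfolding Ud f_def g_def by simp_all
  have injf: "inj_on f U"
  proof (rule inj_onI)
    fix P Q assume PQ: "P \<in> U" "Q \<in> U" "f P = f Q"
    hence "{Some P} = {Some Q}" using tf(1)[of P] tf(1)[of Q] by metis
    thus "P = Q" by simp
  qed
  have injg: "inj_on g U"
  proof (rule inj_onI)
    fix P Q assume PQ: "P \<in> U" "Q \<in> U" "g P = g Q"
    hence "{Some P} = {Some Q}" using tf(3)[of P] tf(3)[of Q] by metis
    thus "P = Q" by simp
  qed
  have disj: "f ` U \<inter> g ` U = {}"
  proof (rule ccontr)
    assume "f ` U \<inter> g ` U \<noteq> {}"
    then obtain P Q where P: "P \<in> U" and Q: "Q \<in> U" and fg: "f P = g Q" by blast
    have "{Some P} = {Some Q}" using tf(1)[OF P] tf(3)[OF Q] fg by metis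
    hence PQ: "P = Q" by simp
    have "{Some (\<mu> * P)} = {Some (- \<mu> * Q)}" using tf(2)[OF P] tf(4)[OF Q] fg by metis
    hence "\<mu> * P = - \<mu> * P" using PQ by simp
    hence "2 * (\<mu> * P) = 0" by (simp add: algebra_simps)
    hence "P = 0" using two m0 by simp
    with P show False unfolding Ud by simp
  qed
  have "card T = card (f ` U) + card (g ` U)"
    unfolding Teq using finU disj by (intro card_Un_disjoint) auto
  also have "\<dots> = 2 * (q + 1)" using card_image[OF injf] card_image[OF injg] cardU Ud by simp
  finally have cT: "card T = 2 * (q + 1)" .
  show ?thesis using Teq RHS cT memb Ud by auto
qed

end

theorem mainTheorem6:
  fixes p m q :: nat and \<mu> :: "'a::{field,finite}"
  assumes "prime p" and "odd p" and "m \<ge> 1" and "q = p ^ m"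
    and "card (UNIV :: 'a set) = q ^ 2"
    and "\<mu> \<in> GFq q" and "\<mu> \<noteq> 0" and "\<mu> ^ 2 \<noteq> 1"
  shows "let b = \<mu> ^ 2;
             s = (1 + \<mu>) / 2; c = ((1 - \<mu>) / 2) ^ 2;
             s' = (1 - \<mu>) / 2; c' = ((1 + \<mu>) / 2) ^ 2;
             U = {P. P * conjq q P = 1};
             T = {C \<in> circles q. tangential C (circle1 q 0 1) \<and> tangential C (circle1 q 0 b)}
         in T = {circle1 q (s * P) c | P. P \<in> U} \<union> {circle1 q (s' * P) c' | P. P \<in> U}
            \<and> card T = 2 * (q + 1)
            \<and> (\<forall>P\<in>U. Some P \<in> circle1 q (s * P) c \<and> Some (\<mu> * P) \<in> circle1 q (s * P) c
                     \<and> Some P \<in> circle1 q (s' * P) c' \<and> Some (- \<mu> * P) \<in> circle1 q (s' * P) c')"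
proof -
  have fin: "finite (UNIV :: 'a set)" by simp
  have p2: "p \<ge> 2" using assms(1) prime_ge_2_nat by blast
  have p3: "p \<noteq> 2" using assms(2) by auto
  have q1: "q > 1" using assms(3,4) p2
    by (metis less_le_trans nat_less_le one_less_power p3 Suc_1 less_2_cases_iff not_less_eq numeral_2_eq_2 order.strict_iff_not)
  have cpos: "CHAR('a) > 0" using finite_imp_CHAR_pos[OF fin] .
  have cpr: "prime CHAR('a)" using prime_CHAR_semidom[OF cpos] .
  have "CHAR('a) dvd card (UNIV :: 'a set)" by (rule CHAR_dvd_CARD)
  hence "CHAR('a) dvd p ^ (m * 2)" using assms(4,5) by (simp add: power_mult)
  hence "CHAR('a) dvd p" using cpr prime_dvd_power by blast
  hence cp: "CHAR('a) = p" using cpr assms(1) primes_dvd_imp_eq by blast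
  have fadd: "(x + y) ^ q = x ^ q + y ^ q" for x y :: 'a
    using freshmans_dream'[of q m x y] cpr cp assms(4) by simp
  have finv: "(x ^ q) ^ q = x" for x :: 'a
    using pow_card_same[of x] assms(5) by (simp add: power_mult[symmetric] power2_eq_square)
  have two: "(2::'a) \<noteq> 0"
  proof
    assume "(2::'a) = 0"
    hence "of_nat 2 = (0::'a)" by simp
    hence "p dvd 2" using of_nat_eq_0_iff_char_dvd cp by metis
    hence "p \<le> 2" by (simp add: dvd_imp_le)
    with p2 p3 show False by simp
  qed
  interpret frob q "conjq q :: 'a \<Rightarrow> 'a"
    by unfold_locales (use q1 fadd finv two in \<open>simp_all add: conjq_def\<close>)
  have cardU: "card {P :: 'a. P * conjq q P = 1} = q + 1"
    using card_U[OF assms(5) q1] by (simp add: conjq_def)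
  have mK: "conjq q \<mu> = \<mu>" using assms(6) by (simp add: GFq_def conjq_def)
  show ?thesis unfolding Let_def
    by (rule main_loc[OF mK assms(7,8) cardU fin refl refl refl refl refl refl refl])
qed

end
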